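(* Let $\mathcal A$ be a commutative semiring with negation map $(-)$ and let $A,B\in M_n(\mathcal A)$. Then $\mathrm{adj}(B)\,\mathrm{adj}(A)\preceq_\circ \mathrm{adj}(AB)$ (entrywise).
   Context: A commutative semiring: commutative associative addition with neutral $\mathbb 0$, commutative associative multiplication with identity $\mathbb 1$, distributive, $x\mathbb 0=\mathbb 0$. Negation map: $(-):\mathcal A\to\mathcal A$ with $(-)(x+y)=(-)x+(-)y$, $(-)((-)x)=x$, $(-)(xy)=((-)x)y$. Write $x(-)y:=x+((-)y)$, $x^\circ:=x(-)x$; $x\preceq_\circ y$ iff $y=x+z^\circ$ for some $z\in\mathcal A$; for matrices, $X\preceq_\circ Y$ iff $X_{ij}\preceq_\circ Y_{ij}$ for all $i,j$. For a permutation $\pi$, $(-)^\pi x=x$ if $\pi$ is even and $(-)x$ if odd; similarly $(-)^kx$ is $x$ for $k$ even and $(-)x$ for $k$ odd. The $(-)$-determinant of $A=(a_{ij})$ is $|A|=\sum_{\pi\in S_n}(-)^\pi\prod_i a_{i,\pi(i)}$. The $(-)$-adjoint $\mathrm{adj}(A)$ is the matrix whose $(i,j)$ entry is $(-)^{i+j}|A_{(j,i)}|$, where $A_{(j,i)}$ is $A$ with row $j$ and column $i$ deleted. *)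

theory Defs
  imports "HOL-Combinatorics.Combinatorics"
begin

text \<open>Matrices over a commutative semiring, of size n, represented as functions
  nat \<Rightarrow> nat \<Rightarrow> 'a; only entries with indices < n are relevant.\<close>

definition neg_map :: "('a::comm_semiring_1 \<Rightarrow> 'a) \<Rightarrow> bool" where
  "neg_map ng \<longleftrightarrow> (\<forall>x y. ng (x + y) = ng x + ng y) \<and> (\<forall>x. ng (ng x) = x)
     \<and> (\<forall>x y. ng (x * y) = ng x * y)"

definition quasi_zero :: "('a::comm_semiring_1 \<Rightarrow> 'a) \<Rightarrow> 'a \<Rightarrow> 'a" where
  "quasi_zero ng x = x + ng x"

definition circ_le :: "('a::comm_semiring_1 \<Rightarrow> 'a) \<Rightarrow> 'a \<Rightarrow> 'a \<Rightarrow> bool" where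
  "circ_le ng x y \<longleftrightarrow> (\<exists>z. y = x + quasi_zero ng z)"

definition mat_circ_le :: "('a::comm_semiring_1 \<Rightarrow> 'a) \<Rightarrow> nat \<Rightarrow> (nat \<Rightarrow> nat \<Rightarrow> 'a)
    \<Rightarrow> (nat \<Rightarrow> nat \<Rightarrow> 'a) \<Rightarrow> bool" where
  "mat_circ_le ng n X Y \<longleftrightarrow> (\<forall>i<n. \<forall>j<n. circ_le ng (X i j) (Y i j))"

definition neg_pow :: "('a::comm_semiring_1 \<Rightarrow> 'a) \<Rightarrow> nat \<Rightarrow> 'a \<Rightarrow> 'a" where
  "neg_pow ng k x = (if even k then x else ng x)"

definition neg_sign :: "('a::comm_semiring_1 \<Rightarrow> 'a) \<Rightarrow> (nat \<Rightarrow> nat) \<Rightarrow> 'a \<Rightarrow> 'a" where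
  "neg_sign ng p x = (if evenperm p then x else ng x)"

definition mat_mult :: "nat \<Rightarrow> (nat \<Rightarrow> nat \<Rightarrow> 'a::comm_semiring_1)
    \<Rightarrow> (nat \<Rightarrow> nat \<Rightarrow> 'a) \<Rightarrow> nat \<Rightarrow> nat \<Rightarrow> 'a" where
  "mat_mult n A B = (\<lambda>i j. \<Sum>k<n. A i k * B k j)"

definition neg_det :: "('a::comm_semiring_1 \<Rightarrow> 'a) \<Rightarrow> nat \<Rightarrow> (nat \<Rightarrow> nat \<Rightarrow> 'a) \<Rightarrow> 'a" where
  "neg_det ng n A = (\<Sum>p\<in>{p. p permutes {..<n}}. neg_sign ng p (\<Prod>i<n. A i (p i)))"

definition minor_mat :: "(nat \<Rightarrow> nat \<Rightarrow> 'a) \<Rightarrow> nat \<Rightarrow> nat \<Rightarrow> nat \<Rightarrow> nat \<Rightarrow> 'a" where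
  "minor_mat A j i = (\<lambda>k l. A (if k < j then k else Suc k) (if l < i then l else Suc l))"

definition neg_adj :: "('a::comm_semiring_1 \<Rightarrow> 'a) \<Rightarrow> nat \<Rightarrow> (nat \<Rightarrow> nat \<Rightarrow> 'a)
    \<Rightarrow> nat \<Rightarrow> nat \<Rightarrow> 'a" where
  "neg_adj ng n A = (\<lambda>i j. neg_pow ng (i + j) (neg_det ng (n - 1) (minor_mat A j i)))"

end

theory Submission
  imports Defs "HOL-Library.FuncSet"
begin

definition sg :: "'a::comm_semiring_1 \<Rightarrow> (nat\<Rightarrow>nat) \<Rightarrow> 'a" where
  "sg e p = (if evenperm p then 1 else e)"

definition dt :: "'a::comm_semiring_1 \<Rightarrow> nat \<Rightarrow> (nat \<Rightarrow> nat \<Rightarrow> 'a) \<Rightarrow> 'a" where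
  "dt e m M = (\<Sum>p\<in>{p. p permutes {..<m}}. sg e p * (\<Prod>i<m. M i (p i)))"

definition rho :: "nat \<Rightarrow> nat \<Rightarrow> nat" where "rho k r = (if r < k then r else Suc r)"
definition rinv :: "nat \<Rightarrow> nat \<Rightarrow> nat" where "rinv k x = (if x < k then x else x - 1)"

lemma sg_comp:
  assumes "e*e=1" "p permutes {..<m}" "q permutes {..<m}"
  shows "sg e (p\<circ>q) = sg e p * sg e q"
proof -
  have "permutation p" "permutation q" using assms permutation_permutes finite_lessThan by blast+
  then show ?thesis using evenperm_comp[of p q] assms(1) by (simp add: sg_def)
qed

lemma D_perm:
  fixes M :: "nat \<Rightarrow> nat \<Rightarrow> 'a::comm_semiring_1"
  assumes e: "e*e=1" and t: "\<tau> permutes {..<m}"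
  shows "(\<Sum>p\<in>{p. p permutes {..<m}}. sg e p * (\<Prod>r<m. M (\<tau> r) (p r))) = sg e \<tau> * dt e m M"
proof -
  have "(\<Sum>p\<in>{p. p permutes {..<m}}. sg e p * (\<Prod>r<m. M (\<tau> r) (p r)))
      = (\<Sum>p\<in>{p. p permutes {..<m}}. sg e p * (\<Prod>r<m. M r (p (inv \<tau> r))))"
  proof (rule sum.cong[OF refl])
    fix p assume "p \<in> {p. p permutes {..<m}}"
    have "(\<Prod>r<m. M (\<tau> r) (p r)) = (\<Prod>r<m. M (\<tau> (inv \<tau> r)) (p (inv \<tau> r)))"
      using prod.permute[OF permutes_inv[OF t], of "\<lambda>r. M (\<tau> r) (p r)"] by (simp add: comp_def)
    also have "\<dots> = (\<Prod>r<m. M r (p (inv \<tau> r)))" using permutes_inverses(1)[OF t] by simp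
    finally show "sg e p * (\<Prod>r<m. M (\<tau> r) (p r)) = sg e p * (\<Prod>r<m. M r (p (inv \<tau> r)))" by simp
  qed
  also have "\<dots> = (\<Sum>p\<in>{p. p permutes {..<m}}. sg e (p\<circ>\<tau>) * (\<Prod>r<m. M r ((p\<circ>\<tau>) (inv \<tau> r))))"
    by (rule sum_permutations_compose_right[OF t, of "\<lambda>p. sg e p * (\<Prod>r<m. M r (p (inv \<tau> r)))"])
  also have "\<dots> = (\<Sum>p\<in>{p. p permutes {..<m}}. sg e \<tau> * (sg e p * (\<Prod>r<m. M r (p r))))"
    by (rule sum.cong[OF refl]) (simp add: sg_comp[OF e _ t] permutes_inverses(1)[OF t] mult_ac)
  finally show ?thesis by (simp add: dt_def sum_distrib_left)
qed

lemma D_noninj: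
  fixes Q :: "nat \<Rightarrow> nat \<Rightarrow> 'a::comm_semiring_1"
  assumes e: "e*e=1" and ab: "a<m" "b<m" "a\<noteq>b" "f a = f b"
  shows "\<exists>z. (\<Sum>p\<in>{p. p permutes {..<m}}. sg e p * (\<Prod>r<m. Q (f r) (p r))) = (1+e)*z"
proof -
  let ?t = "transpose a b"
  let ?P = "{p. p permutes {..<m}}"
  let ?X = "\<lambda>p. \<Prod>r<m. Q (f r) (p r)"
  define Ev where "Ev = ?P \<inter> {p. evenperm p}"
  define Od where "Od = ?P - {p. evenperm p}"
  have t: "?t permutes {..<m}" by (rule permutes_swap_id) (use ab in auto)
  have X: "?X (p\<circ>?t) = ?X p" for p
  proof -
    have "?X p = (\<Prod>r<m. Q (f (?t r)) (p (?t r)))"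
      using prod.permute[OF t, of "\<lambda>r. Q (f r) (p r)"] by (simp add: comp_def)
    also have "\<dots> = ?X (p\<circ>?t)"
      by (rule prod.cong[OF refl]) (use ab in \<open>auto simp: transpose_def\<close>)
    finally show ?thesis by simp
  qed
  have X2: "(\<Prod>r<m. Q (f r) (p (?t r))) = ?X p" for p using X[of p] by (simp add: comp_def)
  have fin: "finite ?P" by (simp add: finite_permutations)
  have split: "sum F ?P = sum F Ev + sum F Od" for F
    unfolding Ev_def Od_def by (rule sum.Int_Diff[OF fin])
  have ev: "evenperm (p\<circ>?t) \<longleftrightarrow> \<not> evenperm p" if "p \<in> ?P" for p
  proof -
    have "permutation p" "permutation ?t" using that t permutation_permutes finite_lessThan by blast+
    then show ?thesis using evenperm_comp evenperm_swap ab(3) by metis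
  qed
  have comp: "p \<circ> ?t \<in> ?P" if "p \<in> ?P" for p using permutes_compose[OF t] that by auto
  have bij: "bij_betw (\<lambda>p. p\<circ>?t) Ev Od"
  proof (rule bij_betw_imageI)
    show "inj_on (\<lambda>p. p\<circ>?t) Ev"
    proof (rule inj_onI)
      fix p q assume "p\<circ>?t = q\<circ>?t"
      then have "p\<circ>?t\<circ>?t = q\<circ>?t\<circ>?t" by simp
      then show "p = q" by (simp add: comp_assoc)
    qed
    show "(\<lambda>p. p\<circ>?t) ` Ev = Od"
    proof
      show "(\<lambda>p. p\<circ>?t) ` Ev \<subseteq> Od" using ev comp unfolding Ev_def Od_def by auto
      show "Od \<subseteq> (\<lambda>p. p\<circ>?t) ` Ev"
      proof
        fix q assume q: "q \<in> Od"
        have "q = (q\<circ>?t)\<circ>?t" by (simp add: comp_assoc)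
        moreover have "q\<circ>?t \<in> Ev" using q ev comp unfolding Ev_def Od_def by auto
        ultimately show "q \<in> (\<lambda>p. p\<circ>?t) ` Ev" by blast
      qed
    qed
  qed
  have "(\<Sum>p\<in>?P. sg e p * ?X p) = (\<Sum>p\<in>Ev. ?X p) + (\<Sum>p\<in>Od. e * ?X p)"
    unfolding split[of "\<lambda>p. sg e p * ?X p"]
    by (auto simp: Ev_def Od_def sg_def intro!: arg_cong2[where f="(+)"] sum.cong)
  also have "(\<Sum>p\<in>Od. e * ?X p) = (\<Sum>p\<in>Ev. e * ?X (p\<circ>?t))"
    by (rule sum.reindex_bij_betw[OF bij, symmetric])
  also have "\<dots> = e * (\<Sum>p\<in>Ev. ?X p)" by (simp add: X2 sum_distrib_left)
  finally show ?thesis by (auto simp: algebra_simps)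
qed

lemma rho_lt: "x < m \<Longrightarrow> rho k x < Suc m" by (simp add: rho_def)
lemma rho_neq: "rho k x \<noteq> k" by (simp add: rho_def)
lemma rho_neq2: "k \<noteq> rho k x" by (simp add: rho_def)
lemma rinv_rho[simp]: "rinv k (rho k x) = x" by (simp add: rho_def rinv_def)
lemma rho_rinv: "y \<noteq> k \<Longrightarrow> rho k (rinv k y) = y" by (auto simp: rho_def rinv_def)
lemma rinv_lt: "y < Suc m \<Longrightarrow> y \<noteq> k \<Longrightarrow> k < Suc m \<Longrightarrow> rinv k y < m" by (auto simp: rinv_def)
lemma rho_inj: "rho k x = rho k y \<longleftrightarrow> x = y" by (metis rinv_rho)

lemma CB:
  fixes P Q :: "nat \<Rightarrow> nat \<Rightarrow> 'a::comm_semiring_1"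
  assumes e: "e*e = 1"
  shows "\<exists>z. dt e m (\<lambda>r s. \<Sum>k<Suc m. P r k * Q k s)
     = (\<Sum>k<Suc m. dt e m (\<lambda>r s. P r (rho k s)) * dt e m (\<lambda>r s. Q (rho k r) s)) + (1+e)*z"
proof -
  let ?P = "{p. p permutes {..<m}}"
  let ?F = "PiE {..<m} (\<lambda>_. {..<Suc m})"
  let ?I = "{f. inj_on f {..<m}}"
  define D where "D f = (\<Sum>p\<in>?P. sg e p * (\<Prod>r<m. Q (f r) (p r)))" for f
  define G where "G f = (\<Prod>r<m. P r (f r)) * D f" for f
  have finF: "finite ?F" by (simp add: finite_PiE)
  have s1: "dt e m (\<lambda>r s. \<Sum>k<Suc m. P r k * Q k s) = (\<Sum>f\<in>?F. G f)"
  proof -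
    have "dt e m (\<lambda>r s. \<Sum>k<Suc m. P r k * Q k s)
       = (\<Sum>p\<in>?P. \<Sum>f\<in>?F. sg e p * ((\<Prod>r<m. P r (f r)) * (\<Prod>r<m. Q (f r) (p r))))"
      unfolding dt_def
    proof (rule sum.cong[OF refl])
      fix p
      have "(\<Prod>r<m. \<Sum>k<Suc m. P r k * Q k (p r)) = (\<Sum>f\<in>?F. \<Prod>r<m. P r (f r) * Q (f r) (p r))"
        by (rule prod_sum_PiE) auto
      then show "sg e p * (\<Prod>r<m. \<Sum>k<Suc m. P r k * Q k (p r)) =
          (\<Sum>f\<in>?F. sg e p * ((\<Prod>r<m. P r (f r)) * (\<Prod>r<m. Q (f r) (p r))))"
        by (simp add: prod.distrib sum_distrib_left)
    qed
    also have "\<dots> = (\<Sum>f\<in>?F. \<Sum>p\<in>?P. sg e p * ((\<Prod>r<m. P r (f r)) * (\<Prod>r<m. Q (f r) (p r))))"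
      by (rule sum.swap)
    also have "\<dots> = (\<Sum>f\<in>?F. G f)" by (simp add: G_def D_def sum_distrib_left mult_ac)
    finally show ?thesis .
  qed
  have s2: "(\<Sum>f\<in>?F. G f) = (\<Sum>f\<in>?F \<inter> ?I. G f) + (\<Sum>f\<in>?F - ?I. G f)"
    by (rule sum.Int_Diff[OF finF])
  have "\<forall>f\<in>?F - ?I. \<exists>z. G f = (1+e)*z"
  proof
    fix f assume "f \<in> ?F - ?I"
    then obtain a b where ab: "a<m" "b<m" "a\<noteq>b" "f a = f b" unfolding inj_on_def by auto
    obtain z where "D f = (1+e)*z" using D_noninj[OF e ab, of Q] unfolding D_def by blast
    then show "\<exists>z. G f = (1+e)*z" unfolding G_def by (metis mult.left_commute)
  qed
  then obtain zf where zf: "\<forall>f\<in>?F - ?I. G f = (1+e) * zf f" by metis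
  have s3: "(\<Sum>f\<in>?F - ?I. G f) = (1+e) * (\<Sum>f\<in>?F - ?I. zf f)"
    using zf by (simp add: sum_distrib_left)
  have card1: "card {k\<in>{..<Suc m}. k \<notin> f`{..<m}} = 1" if f: "f \<in> ?F \<inter> ?I" for f
  proof -
    have sub: "f`{..<m} \<subseteq> {..<Suc m}" using f by (auto simp: PiE_iff)
    have "card (f`{..<m}) = m" using f by (simp add: card_image)
    moreover have "{k\<in>{..<Suc m}. k \<notin> f`{..<m}} = {..<Suc m} - f`{..<m}" by auto
    ultimately show ?thesis using card_Diff_subset[OF _ sub] by simp
  qed
  have s4: "(\<Sum>f\<in>?F \<inter> ?I. G f) = (\<Sum>f\<in>?F \<inter> ?I. \<Sum>k\<in>{k\<in>{..<Suc m}. k \<notin> f`{..<m}}. G f)"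
  proof (rule sum.cong[OF refl])
    fix f assume "f \<in> ?F \<inter> ?I"
    from card1[OF this] show "G f = (\<Sum>k\<in>{k\<in>{..<Suc m}. k \<notin> f`{..<m}}. G f)" by simp
  qed
  also have "\<dots> = (\<Sum>k<Suc m. \<Sum>f\<in>{f\<in>?F \<inter> ?I. k \<notin> f`{..<m}}. G f)"
    by (rule sum.swap_restrict) (use finF in auto)
  also have "\<dots> = (\<Sum>k<Suc m. dt e m (\<lambda>r s. P r (rho k s)) * dt e m (\<lambda>r s. Q (rho k r) s))"
  proof (rule sum.cong[OF refl])
    fix k assume k: "k \<in> {..<Suc m}"
    let ?T = "{f\<in>?F \<inter> ?I. k \<notin> f`{..<m}}"
    let ?j = "\<lambda>\<tau>. restrict (rho k \<circ> \<tau>) {..<m}"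
    let ?i = "\<lambda>f r. if r < m then rinv k (f r) else r"
    have "(\<Sum>\<tau>\<in>?P. G (?j \<tau>)) = (\<Sum>f\<in>?T. G f)"
    proof (rule sum.reindex_bij_witness[where i="?i" and j="?j"])
      fix \<tau> assume t: "\<tau> \<in> ?P"
      show "?i (?j \<tau>) = \<tau>"
        using t by (auto simp: fun_eq_iff permutes_not_in)
      have tl: "\<tau> r < m" if "r < m" for r using permutes_in_image[of \<tau> "{..<m}" r] t that by auto
      have "inj_on (rho k \<circ> \<tau>) {..<m}"
        using permutes_inj[of \<tau>] t by (auto simp: inj_on_def rho_inj dest: injD)
      then show "?j \<tau> \<in> ?T"
      proof -
        have "?j \<tau> \<in> ?F" using tl rho_lt by (auto simp: PiE_iff)
        moreover have "inj_on (?j \<tau>) {..<m}" using \<open>inj_on (rho k \<circ> \<tau>) {..<m}\<close>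
          by (simp add: inj_on_def)
        moreover have "k \<notin> ?j \<tau> ` {..<m}" using rho_neq2 by auto
        ultimately show ?thesis by blast
      qed
    next
      fix f assume f: "f \<in> ?T"
      then have fr: "f r < Suc m" "f r \<noteq> k" if "r < m" for r using that by (auto simp: PiE_iff)
      show "?j (?i f) = f"
      proof
        fix r show "?j (?i f) r = f r"
        proof (cases "r < m")
          case True then show ?thesis using fr[OF True] by (simp add: rho_rinv)
        next
          case False
          have "f r = undefined" using f False by (intro PiE_arb[of f "{..<m}"]) auto
          then show ?thesis using False by simp
        qed
      qed
      have inj: "inj_on (?i f) {..<m}"
      proof (rule inj_onI)
        fix x y assume xy: "x \<in> {..<m}" "y \<in> {..<m}" "?i f x = ?i f y"
        then have "rho k (rinv k (f x)) = rho k (rinv k (f y))" by simp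
        moreover have "x < m" "y < m" using xy by auto
        ultimately have "f x = f y" using rho_rinv[OF fr(2)[of x]] rho_rinv[OF fr(2)[of y]] by metis
        then show "x = y" using f xy by (auto simp: inj_on_def)
      qed
      have img: "?i f ` {..<m} \<subseteq> {..<m}" using fr rinv_lt k by auto
      have "bij_betw (?i f) {..<m} {..<m}"
        using inj endo_inj_surj[OF _ img inj] by (simp add: bij_betw_def)
      then have "?i f permutes {..<m}" by (rule bij_imp_permutes) simp
      then show "?i f \<in> ?P" by simp
    qed simp
    also have "(\<Sum>\<tau>\<in>?P. G (?j \<tau>)) = (\<Sum>\<tau>\<in>?P. (sg e \<tau> * (\<Prod>r<m. P r (rho k (\<tau> r)))) * dt e m (\<lambda>r s. Q (rho k r) s))"
    proof (rule sum.cong[OF refl])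
      fix \<tau> assume t: "\<tau> \<in> ?P"
      have "D (?j \<tau>) = (\<Sum>p\<in>?P. sg e p * (\<Prod>r<m. Q (rho k (\<tau> r)) (p r)))"
        unfolding D_def by (intro sum.cong prod.cong) auto
      also have "\<dots> = sg e \<tau> * dt e m (\<lambda>r s. Q (rho k r) s)"
        using D_perm[OF e, of \<tau> m "\<lambda>r s. Q (rho k r) s"] t by simp
      finally have "D (?j \<tau>) = \<dots>" .
      moreover have "(\<Prod>r<m. P r (?j \<tau> r)) = (\<Prod>r<m. P r (rho k (\<tau> r)))"
        by (intro prod.cong) auto
      ultimately show "G (?j \<tau>) = (sg e \<tau> * (\<Prod>r<m. P r (rho k (\<tau> r)))) * dt e m (\<lambda>r s. Q (rho k r) s)"
        unfolding G_def by (simp add: mult_ac)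
    qed
    also have "\<dots> = dt e m (\<lambda>r s. P r (rho k s)) * dt e m (\<lambda>r s. Q (rho k r) s)"
      by (simp add: dt_def sum_distrib_right)
    finally show "(\<Sum>f\<in>?T. G f) = \<dots>" by simp
  qed
  finally show ?thesis using s1 s2 s3 by auto
qed

lemma minor_rho: "minor_mat A j i = (\<lambda>r s. A (rho j r) (rho i s))"
  by (simp add: minor_mat_def rho_def fun_eq_iff)

theorem proposition8p20:
  fixes ng :: "'a::comm_semiring_1 \<Rightarrow> 'a" and n :: nat
    and A B :: "nat \<Rightarrow> nat \<Rightarrow> 'a"
  assumes "neg_map ng"
  shows "mat_circ_le ng n (mat_mult n (neg_adj ng n B) (neg_adj ng n A))
           (neg_adj ng n (mat_mult n A B))"
proof -
  define e where "e = ng 1"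
  have ngm: "ng (x*y) = ng x * y" for x y using assms by (simp add: neg_map_def)
  have ngng: "ng (ng x) = x" for x using assms by (simp add: neg_map_def)
  have nge: "ng x = e * x" for x using ngm[of 1 x] by (simp add: e_def)
  have e: "e * e = 1" using ngng[of 1] nge[of e] by (simp add: e_def)
  define pw where "pw k = (if even k then 1 else e)" for k :: nat
  have pwadd: "pw a * pw b = pw (a+b)" for a b using e by (auto simp: pw_def)
  have npow: "neg_pow ng k x = pw k * x" for k x by (simp add: neg_pow_def pw_def nge)
  have ndet: "neg_det ng m M = dt e m M" for m M
    unfolding neg_det_def dt_def
    by (rule sum.cong[OF refl]) (auto simp: neg_sign_def sg_def nge[of "\<Prod>i<m. M i (_ i)"])
  have qz: "quasi_zero ng z = (1+e)*z" for z by (simp add: quasi_zero_def nge algebra_simps)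
  show ?thesis unfolding mat_circ_le_def
  proof (intro allI impI)
    fix i j assume i: "i < n" and j: "j < n"
    then obtain m where n: "n = Suc m" by (cases n) auto
    have mm: "minor_mat (mat_mult n A B) j i = (\<lambda>r s. \<Sum>k<Suc m. A (rho j r) k * B k (rho i s))"
      by (simp add: minor_rho mat_mult_def n)
    obtain z where z: "dt e m (\<lambda>r s. \<Sum>k<Suc m. A (rho j r) k * B k (rho i s))
      = (\<Sum>k<Suc m. dt e m (\<lambda>r s. A (rho j r) (rho k s)) * dt e m (\<lambda>r s. B (rho k r) (rho i s))) + (1+e)*z"
      using CB[OF e, of m "\<lambda>r k. A (rho j r) k" "\<lambda>k s. B k (rho i s)"] by blast
    have pw2: "pw (i+k) * pw (k+j) = pw (i+j)" for k
      by (cases "even i"; cases "even j"; cases "even k") (auto simp: pw_def e)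
    have lhs: "mat_mult n (neg_adj ng n B) (neg_adj ng n A) i j
       = (\<Sum>k<Suc m. pw (i+j) * (dt e m (\<lambda>r s. A (rho j r) (rho k s)) * dt e m (\<lambda>r s. B (rho k r) (rho i s))))"
    proof -
      have "mat_mult n (neg_adj ng n B) (neg_adj ng n A) i j
        = (\<Sum>k<Suc m. (pw (i+k) * pw (k+j)) * (dt e m (\<lambda>r s. A (rho j r) (rho k s)) * dt e m (\<lambda>r s. B (rho k r) (rho i s))))"
        by (simp add: mat_mult_def neg_adj_def npow ndet minor_rho n mult_ac)
      then show ?thesis by (simp only: pw2)
    qed
    have rhs: "neg_adj ng n (mat_mult n A B) i j = pw (i+j) * dt e m (\<lambda>r s. \<Sum>k<Suc m. A (rho j r) k * B k (rho i s))"
      unfolding neg_adj_def npow ndet mm by (simp only: n diff_Suc_1)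
    show "circ_le ng (mat_mult n (neg_adj ng n B) (neg_adj ng n A) i j) (neg_adj ng n (mat_mult n A B) i j)"
      unfolding circ_le_def qz lhs rhs z
      by (rule exI[of _ "pw (i+j) * z"]) (simp add: sum_distrib_left algebra_simps)
  qed
qed

end
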